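(* Let $n\ge 3$ be an integer, let $d_0,\dots,d_{n-1}>0$ be real numbers (indices taken modulo $n$), and let $\lambda\in(\tfrac14,1)$. Define $$\alpha_j=\frac{1}{n}\,\frac{d_{j-1}d_{j+2}}{(d_{j-1}+d_{j+1})(d_j+d_{j+2})},\qquad \beta_i=\frac{d_{i-1}(d_{i-2}+d_{i+2})+d_{i+2}(d_{i-1}+d_{i+3})}{\sum_{k=0}^{n-1}(d_k+d_{k+2})(d_{k-1}+d_{k+3})},$$ and the $n\times n$ matrix $Q_n=(Q_{i,j})_{i,j=0}^{n-1}$ by $$Q_{i,j}=\begin{cases}(1-\lambda)\beta_j+2\lambda\alpha_i\left(1+2\cos\frac{2(j-i)\pi}{n}\right), & j\neq i,\\[2pt] \lambda+(1-\lambda)\beta_i-2(n-3)\lambda\alpha_i, & j=i.\end{cases}$$ Then $1$ is an eigenvalue of $Q_n$, $\lambda$ is an eigenvalue of $Q_n$ of multiplicity two, and the remaining $n-3$ eigenvalues $\lambda_4,\dots,\lambda_n$ of $Q_n$ (counted with multiplicity) satisfy $|\lambda_k|<\lambda$; i.e. $\lambda_1=1>\lambda_2=\lambda_3=\lambda>|\lambda_k|$ for $k=4,\dots,n$.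
   Context: $Q_n$ is the block of the subdivision matrix of a (tuned hybrid non-uniform) subdivision scheme acting on the $n$ vertices of the polygonal face surrounding an extraordinary vertex of valence $n$, where $d_j$ are the knot intervals of the edges around that face and $\lambda$ is the tuning parameter. Note $\beta_i$ is the coefficient of $P_i$ in $C=\frac{\sum_{i}(d_iP_{i+1}+d_{i+2}P_i)(d_{i-1}+d_{i+3})}{\sum_j(d_j+d_{j+2})(d_{j-1}+d_{j+3})}$. *)

theory Defs
  imports "Jordan_Normal_Form.Char_Poly"
begin

definition dm :: "(nat \<Rightarrow> real) \<Rightarrow> nat \<Rightarrow> int \<Rightarrow> real" where
  "dm d n k = d (nat (k mod int n))"

definition alpha :: "(nat \<Rightarrow> real) \<Rightarrow> nat \<Rightarrow> nat \<Rightarrow> real" where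
  "alpha d n j = (let j = int j in
     (1 / real n) * (dm d n (j - 1) * dm d n (j + 2)) /
     ((dm d n (j - 1) + dm d n (j + 1)) * (dm d n j + dm d n (j + 2))))"

definition beta :: "(nat \<Rightarrow> real) \<Rightarrow> nat \<Rightarrow> nat \<Rightarrow> real" where
  "beta d n i = (let i = int i in
     (dm d n (i - 1) * (dm d n (i - 2) + dm d n (i + 2))
      + dm d n (i + 2) * (dm d n (i - 1) + dm d n (i + 3))) /
     (\<Sum>k<n. (dm d n (int k) + dm d n (int k + 2)) * (dm d n (int k - 1) + dm d n (int k + 3))))"

definition Qmat :: "(nat \<Rightarrow> real) \<Rightarrow> nat \<Rightarrow> real \<Rightarrow> real mat" where
  "Qmat d n lam = mat n n (\<lambda>(i, j).
     if j \<noteq> i then (1 - lam) * beta d n j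
        + 2 * lam * alpha d n i * (1 + 2 * cos (2 * (real j - real i) * pi / real n))
     else lam + (1 - lam) * beta d n i - 2 * (real n - 3) * lam * alpha d n i)"

end

theory Submission
  imports Defs "Jordan_Normal_Form.Schur_Decomposition"
begin

lemma sum_cis_zero:
  fixes n m :: nat
  assumes "n > 0" "\<not> n dvd m"
  shows "(\<Sum>k<n. cis (2 * pi * real m * real k / real n)) = 0"
proof -
  define w where "w = cis (2 * pi * real m / real n)"
  have w1: "w \<noteq> 1"
  proof
    assume "w = 1"
    then obtain k :: int where k: "2 * pi * real m / real n = 2 * pi * of_int k"
      by (auto simp: w_def complex_eq_iff cos_one_2pi_int)
    with assms have "real m = real n * of_int k" by (simp add: field_simps)
    then have "int m = int n * k"
      by (metis of_int_eq_iff of_int_mult of_int_of_nat_eq)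
    then have "int n dvd int m" by simp
    with assms show False by simp
  qed
  have "(\<Sum>k<n. cis (2 * pi * real m * real k / real n)) = (\<Sum>k<n. w ^ k)"
    by (intro sum.cong refl) (auto simp: w_def DeMoivre mult_ac)
  also have "\<dots> = (w ^ n - 1) / (w - 1)"
    using w1 by (subst geometric_sum) auto
  also have "w ^ n = cis (2 * pi * real m)" using assms by (auto simp: w_def DeMoivre)
  also have "\<dots> = 1" by (simp add: complex_eq_iff cos_int_2pin sin_int_2pin)
  finally show ?thesis by simp
qed

lemma sum_cos_zero:
  fixes n m :: nat
  assumes "n > 0" "\<not> n dvd m"
  shows "(\<Sum>k<n. cos (2 * pi * real m * real k / real n)) = 0"
    and "(\<Sum>k<n. sin (2 * pi * real m * real k / real n)) = 0"
  using arg_cong[OF sum_cis_zero[OF assms], of Re] arg_cong[OF sum_cis_zero[OF assms], of Im]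
  by (simp_all add: Re_sum Im_sum)

definition cc :: "nat \<Rightarrow> nat \<Rightarrow> real" where "cc n k = cos (2 * pi * real k / real n)"
definition ss :: "nat \<Rightarrow> nat \<Rightarrow> real" where "ss n k = sin (2 * pi * real k / real n)"

lemma trig_sums:
  assumes "n \<ge> 3"
  shows "(\<Sum>k<n. cc n k) = 0" "(\<Sum>k<n. ss n k) = 0"
    "(\<Sum>k<n. cc n k * cc n k) = real n / 2" "(\<Sum>k<n. ss n k * ss n k) = real n / 2"
    "(\<Sum>k<n. cc n k * ss n k) = 0"
proof -
  have n0: "n > 0" and nd1: "\<not> n dvd 1" and nd2: "\<not> n dvd 2" using assms
    by (auto dest: dvd_imp_le)
  note A = sum_cos_zero[OF n0 nd1] and B = sum_cos_zero[OF n0 nd2]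
  show "(\<Sum>k<n. cc n k) = 0" "(\<Sum>k<n. ss n k) = 0" using A by (simp_all add: cc_def ss_def)
  have c2: "cc n k * cc n k = 1/2 + cos (2 * pi * real 2 * real k / real n) / 2" for k
    unfolding cc_def using cos_double_cos[of "2 * pi * real k / real n"]
    by (simp add: power2_eq_square mult_ac) (simp add: field_simps)
  have s2: "ss n k * ss n k = 1/2 - cos (2 * pi * real 2 * real k / real n) / 2" for k
    unfolding ss_def using cos_double_sin[of "2 * pi * real k / real n"]
    by (simp add: power2_eq_square mult_ac) (simp add: field_simps)
  have cs: "cc n k * ss n k = sin (2 * pi * real 2 * real k / real n) / 2" for k
    unfolding ss_def cc_def using sin_double[of "2 * pi * real k / real n"]
    by (simp add: mult_ac)
  show "(\<Sum>k<n. cc n k * cc n k) = real n / 2"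
    unfolding c2 sum.distrib sum_divide_distrib[symmetric] B by simp
  show "(\<Sum>k<n. ss n k * ss n k) = real n / 2"
    unfolding s2 sum_subtractf sum_divide_distrib[symmetric] B by simp
  show "(\<Sum>k<n. cc n k * ss n k) = 0"
    unfolding cs sum_divide_distrib[symmetric] B by simp
qed

lemma shift1:
  fixes g :: "int \<Rightarrow> 'a::ab_group_add"
  assumes "\<And>k. g (k + int n) = g k"
  shows "(\<Sum>k<n. g (int k + 1)) = (\<Sum>k<n. g (int k))"
proof -
  have "(\<Sum>k<Suc n. g (int k)) = g 0 + (\<Sum>k<n. g (int (Suc k)))"
    by (subst sum.lessThan_Suc_shift) simp
  moreover have "(\<Sum>k<Suc n. g (int k)) = (\<Sum>k<n. g (int k)) + g (int n)" by simp
  moreover have "g (int n) = g 0" using assms[of 0] by simp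
  ultimately show ?thesis by (simp add: add.commute)
qed

lemma shiftc:
  fixes g :: "int \<Rightarrow> 'a::ab_group_add"
  assumes "\<And>k. g (k + int n) = g k"
  shows "(\<Sum>k<n. g (int k + c)) = (\<Sum>k<n. g (int k))"
proof (induction c rule: int_induct[where k = 0])
  case base
  then show ?case by simp
next
  case (step1 i)
  have "(\<Sum>k<n. g (int k + (i + 1))) = (\<Sum>k<n. (\<lambda>k. g (k + i)) (int k + 1))"
    by (simp add: add_ac)
  also have "\<dots> = (\<Sum>k<n. (\<lambda>k. g (k + i)) (int k))"
    by (rule shift1) (metis add.commute add.left_commute assms)
  finally show ?case using step1 by simp
next
  case (step2 i)
  define h where "h k = g (k + (i - 1))" for k
  have ph: "h (k + int n) = h k" for k unfolding h_def
    by (metis add.commute add.left_commute assms)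
  have e1: "(\<Sum>k<n. h (int k + 1)) = (\<Sum>k<n. h (int k))" by (rule shift1[of h n, OF ph])
  have e2: "h (int k + 1) = g (int k + i)" for k unfolding h_def by (simp add: algebra_simps)
  have e3: "h (int k) = g (int k + (i - 1))" for k unfolding h_def by simp
  from e1 step2(2) show ?case unfolding e2 e3 by simp
qed

lemma dm_per: "dm d n (k + int n) = dm d n k"
  by (simp add: dm_def)

lemma dm_pos: assumes "n > 0" "\<And>i. i < n \<Longrightarrow> d i > 0" shows "dm d n k > 0"
  unfolding dm_def using assms
  by (metis Euclidean_Rings.pos_mod_bound Euclidean_Rings.pos_mod_sign nat_less_iff of_nat_0_less_iff)

lemma beta_sum:
  assumes "n \<ge> 3" "\<And>i. i < n \<Longrightarrow> d i > 0"
  shows "(\<Sum>i<n. beta d n i) = 1"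
proof -
  let ?D = "dm d n"
  define S where "S = (\<Sum>k<n. (?D (int k) + ?D (int k + 2)) * (?D (int k - 1) + ?D (int k + 3)))"
  have pos: "S > 0" unfolding S_def using assms dm_pos[of n d]
    by (intro sum_pos) (auto intro!: mult_pos_pos add_pos_pos simp: lessThan_empty_iff)
  define g1 where "g1 k = ?D k * ?D (k - 1)" for k
  define g2 where "g2 k = ?D k * ?D (k + 3)" for k
  have p1: "g1 (k + int n) = g1 k" for k unfolding g1_def
    by (metis add.commute add_diff_eq dm_per)
  have p2: "g2 (k + int n) = g2 k" for k unfolding g2_def
    by (metis add.commute add.left_commute dm_per)
  have num: "(\<Sum>i<n. ?D (int i - 1) * (?D (int i - 2) + ?D (int i + 2))
      + ?D (int i + 2) * (?D (int i - 1) + ?D (int i + 3)))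
    = (\<Sum>i<n. g1 (int i + (-1))) + 2 * (\<Sum>i<n. g2 (int i + (-1))) + (\<Sum>i<n. g1 (int i + 3))"
    unfolding g1_def g2_def by (simp add: sum.distrib sum_distrib_left algebra_simps)
  have den: "S = (\<Sum>i<n. g1 (int i)) + (\<Sum>i<n. g2 (int i)) + (\<Sum>i<n. g2 (int i + (-1))) + (\<Sum>i<n. g1 (int i + 3))"
    unfolding S_def g1_def g2_def by (simp add: sum.distrib sum_distrib_left algebra_simps)
  have "(\<Sum>i<n. beta d n i) = (\<Sum>i<n. ?D (int i - 1) * (?D (int i - 2) + ?D (int i + 2))
      + ?D (int i + 2) * (?D (int i - 1) + ?D (int i + 3))) / S"
    unfolding beta_def Let_def S_def sum_divide_distrib by (rule refl)
  also have "\<dots> = 1" unfolding num using pos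
    unfolding den shiftc[of g1, OF p1] shiftc[of g2, OF p2] by simp
  finally show ?thesis .
qed

lemma Qentry:
  assumes "i < n" "j < n"
  shows "Qmat d n lam $$ (i,j) = (if i = j then lam - 2 * real n * lam * alpha d n i else 0)
     + (1 - lam) * beta d n j + 2 * lam * alpha d n i * (1 + 2 * (cc n j * cc n i + ss n j * ss n i))"
proof -
  have n: "real n > 0" using assms by simp
  have "cos (2 * (real j - real i) * pi / real n) = cos (2 * pi * real j / real n - 2 * pi * real i / real n)"
    by (rule arg_cong[where f=cos]) (simp add: diff_divide_distrib algebra_simps)
  also have "\<dots> = cc n j * cc n i + ss n j * ss n i" unfolding cc_def ss_def cos_diff ..
  finally have c: "cos (2 * (real j - real i) * pi / real n) = cc n j * cc n i + ss n j * ss n i" .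
  have one: "cc n i * cc n i + ss n i * ss n i = 1" unfolding cc_def ss_def
    by (metis power2_eq_square sin_cos_squared_add3)
  show ?thesis
  proof (cases "i = j")
    case True
    then show ?thesis unfolding Qmat_def using assms one by (simp add: algebra_simps)
  next
    case False
    then show ?thesis unfolding Qmat_def using assms c by simp
  qed
qed

lemma rows:
  assumes n3: "n \<ge> 3" and i: "i < n" and dpos: "\<And>i. i < n \<Longrightarrow> d i > 0"
  shows "(\<Sum>k<n. Qmat d n lam $$ (i,k)) = 1"
    "(\<Sum>k<n. Qmat d n lam $$ (i,k) * cc n k) = lam * cc n i + (1 - lam) * (\<Sum>k<n. beta d n k * cc n k)"
    "(\<Sum>k<n. Qmat d n lam $$ (i,k) * ss n k) = lam * ss n i + (1 - lam) * (\<Sum>k<n. beta d n k * ss n k)"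
proof -
  note T = trig_sums[OF n3]
  define A where "A = lam - 2 * real n * lam * alpha d n i"
  define E where "E = 2 * lam * alpha d n i"
  have q: "Qmat d n lam $$ (i,k) = (if i = k then A else 0) + (1 - lam) * beta d n k
      + E + 2 * E * cc n i * cc n k + 2 * E * ss n i * ss n k" if "k < n" for k
    unfolding Qentry[OF i that] A_def E_def by (simp add: algebra_simps)
  have "(\<Sum>k<n. Qmat d n lam $$ (i,k)) = (\<Sum>k<n. (if i = k then A else 0) + (1 - lam) * beta d n k
      + E + 2 * E * cc n i * cc n k + 2 * E * ss n i * ss n k)"
    by (rule sum.cong) (auto simp: q)
  also have "\<dots> = A + (1 - lam) * (\<Sum>k<n. beta d n k) + real n * E + 2 * E * cc n i * (\<Sum>k<n. cc n k)
      + 2 * E * ss n i * (\<Sum>k<n. ss n k)"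
    using i by (simp add: sum.distrib sum_distrib_left)
  also have "\<dots> = 1" using beta_sum[OF n3 dpos] unfolding T A_def E_def by simp
  finally show "(\<Sum>k<n. Qmat d n lam $$ (i,k)) = 1" .
  have "(\<Sum>k<n. Qmat d n lam $$ (i,k) * cc n k) = (\<Sum>k<n. (if i = k then A * cc n i else 0) + (1 - lam) * (beta d n k * cc n k)
      + E * cc n k + 2 * E * cc n i * (cc n k * cc n k) + 2 * E * ss n i * (cc n k * ss n k))"
    by (rule sum.cong) (auto simp: q algebra_simps)
  also have "\<dots> = A * cc n i + (1 - lam) * (\<Sum>k<n. beta d n k * cc n k) + E * (\<Sum>k<n. cc n k) + 2 * E * cc n i * (\<Sum>k<n. cc n k * cc n k)
      + 2 * E * ss n i * (\<Sum>k<n. cc n k * ss n k)"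
    using i by (simp add: sum.distrib sum_distrib_left)
  also have "\<dots> = lam * cc n i + (1 - lam) * (\<Sum>k<n. beta d n k * cc n k)" unfolding T A_def E_def
    by (simp add: algebra_simps)
  finally show "(\<Sum>k<n. Qmat d n lam $$ (i,k) * cc n k) = lam * cc n i + (1 - lam) * (\<Sum>k<n. beta d n k * cc n k)" .
  have "(\<Sum>k<n. Qmat d n lam $$ (i,k) * ss n k) = (\<Sum>k<n. (if i = k then A * ss n i else 0) + (1 - lam) * (beta d n k * ss n k)
      + E * ss n k + 2 * E * cc n i * (cc n k * ss n k) + 2 * E * ss n i * (ss n k * ss n k))"
    by (rule sum.cong) (auto simp: q algebra_simps)
  also have "\<dots> = A * ss n i + (1 - lam) * (\<Sum>k<n. beta d n k * ss n k) + E * (\<Sum>k<n. ss n k) + 2 * E * cc n i * (\<Sum>k<n. cc n k * ss n k)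
      + 2 * E * ss n i * (\<Sum>k<n. ss n k * ss n k)"
    using i by (simp add: sum.distrib sum_distrib_left)
  also have "\<dots> = lam * ss n i + (1 - lam) * (\<Sum>k<n. beta d n k * ss n k)" unfolding T A_def E_def
    by (simp add: algebra_simps)
  finally show "(\<Sum>k<n. Qmat d n lam $$ (i,k) * ss n k) = lam * ss n i + (1 - lam) * (\<Sum>k<n. beta d n k * ss n k)" .
qed

lemma alpha_bounds:
  assumes "n > 0" "\<And>i. i < n \<Longrightarrow> d i > 0"
  shows "0 < real n * alpha d n i" "real n * alpha d n i < 1"
proof -
  define x where "x = dm d n (int i - 1)"
  define y where "y = dm d n (int i + 2)"
  define z where "z = dm d n (int i + 1)"
  define w where "w = dm d n (int i)"
  have p: "x > 0" "y > 0" "z > 0" "w > 0" unfolding x_def y_def z_def w_def using dm_pos[OF assms] by auto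
  have e: "real n * alpha d n i = x * y / ((x + z) * (w + y))"
    unfolding alpha_def Let_def x_def y_def z_def w_def using assms(1) by simp
  show "0 < real n * alpha d n i" unfolding e using p by simp
  have "x * y < (x + z) * (w + y)" using p by (simp add: algebra_simps add_pos_pos)
  then show "real n * alpha d n i < 1" unfolding e using p by simp
qed

lemma key:
  fixes y :: "nat \<Rightarrow> complex"
  assumes n3: "n \<ge> 3" and dpos: "\<And>i. i < n \<Longrightarrow> d i > 0" and lam: "lam > 0"
    and h0: "(\<Sum>i<n. y i) = 0"
    and h1: "(\<Sum>i<n. of_real (cc n i) * y i) = 0"
    and h2: "(\<Sum>i<n. of_real (ss n i) * y i) = 0"
    and hev: "\<And>j. j < n \<Longrightarrow> (\<Sum>i<n. y i * of_real (Qmat d n lam $$ (i,j))) = mu * y j"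
    and hnz: "i0 < n" "y i0 \<noteq> 0"
  shows "cmod mu < lam"
proof -
  define A where "A i = lam - 2 * real n * lam * alpha d n i" for i
  define E where "E i = 2 * lam * alpha d n i" for i
  define K where "K = (\<Sum>j<n. of_real (beta d n j) * cnj (y j))"
  have c0: "(\<Sum>j<n. cnj (y j)) = 0" using h0 by (metis complex_cnj_zero cnj_sum)
  have c1: "(\<Sum>j<n. of_real (cc n j) * cnj (y j)) = 0" using arg_cong[OF h1, of cnj]
    by simp
  have c2: "(\<Sum>j<n. of_real (ss n j) * cnj (y j)) = 0" using arg_cong[OF h2, of cnj]
    by simp
  have inner: "(\<Sum>j<n. of_real (Qmat d n lam $$ (i,j)) * cnj (y j)) = of_real (A i) * cnj (y i) + of_real (1 - lam) * K"
    if i: "i < n" for i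
  proof -
    have q: "of_real (Qmat d n lam $$ (i,j)) * cnj (y j) = (if i = j then of_real (A i) * cnj (y i) else 0)
      + of_real (1 - lam) * (of_real (beta d n j) * cnj (y j)) + of_real (E i) * cnj (y j)
      + of_real (2 * E i * cc n i) * (of_real (cc n j) * cnj (y j))
      + of_real (2 * E i * ss n i) * (of_real (ss n j) * cnj (y j))" if j: "j < n" for j
      unfolding Qentry[OF i j] A_def E_def by (simp add: algebra_simps)
    have "(\<Sum>j<n. of_real (Qmat d n lam $$ (i,j)) * cnj (y j)) = (\<Sum>j<n. (if i = j then of_real (A i) * cnj (y i) else 0)
      + of_real (1 - lam) * (of_real (beta d n j) * cnj (y j)) + of_real (E i) * cnj (y j)
      + of_real (2 * E i * cc n i) * (of_real (cc n j) * cnj (y j))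
      + of_real (2 * E i * ss n i) * (of_real (ss n j) * cnj (y j)))"
      by (rule sum.cong) (auto simp: q)
    also have "\<dots> = of_real (A i) * cnj (y i) + of_real (1 - lam) * K + of_real (E i) * (\<Sum>j<n. cnj (y j))
      + of_real (2 * E i * cc n i) * (\<Sum>j<n. of_real (cc n j) * cnj (y j))
      + of_real (2 * E i * ss n i) * (\<Sum>j<n. of_real (ss n j) * cnj (y j))"
      using i unfolding K_def by (simp add: sum.distrib sum_distrib_left)
    also have "\<dots> = of_real (A i) * cnj (y i) + of_real (1 - lam) * K" unfolding c0 c1 c2 by simp
    finally show ?thesis .
  qed
  have "mu * (\<Sum>j<n. y j * cnj (y j)) = (\<Sum>j<n. (\<Sum>i<n. y i * of_real (Qmat d n lam $$ (i,j))) * cnj (y j))"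
    by (simp add: sum_distrib_left hev mult.assoc)
  also have "\<dots> = (\<Sum>i<n. y i * (\<Sum>j<n. of_real (Qmat d n lam $$ (i,j)) * cnj (y j)))"
    by (simp add: sum_distrib_left sum_distrib_right mult.assoc) (rule sum.swap)
  also have "\<dots> = (\<Sum>i<n. y i * (of_real (A i) * cnj (y i) + of_real (1 - lam) * K))"
    by (rule sum.cong) (auto simp: inner)
  also have "\<dots> = (\<Sum>i<n. of_real (A i) * (y i * cnj (y i))) + of_real (1 - lam) * K * (\<Sum>i<n. y i)"
  proof -
    have "y i * (of_real (A i) * cnj (y i) + of_real (1 - lam) * K) = of_real (A i) * (y i * cnj (y i)) + (of_real (1 - lam) * K) * y i" for i
      by (simp add: algebra_simps)
    then show ?thesis by (simp add: sum.distrib sum_distrib_left)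
  qed
  also have "\<dots> = (\<Sum>i<n. of_real (A i) * (y i * cnj (y i)))" using h0 by simp
  finally have eq: "mu * (\<Sum>j<n. y j * cnj (y j)) = (\<Sum>i<n. of_real (A i) * (y i * cnj (y i)))" .
  define N where "N = (\<Sum>j<n. (cmod (y j))^2)"
  define R where "R = (\<Sum>j<n. A j * (cmod (y j))^2)"
  have yy: "y j * cnj (y j) = of_real ((cmod (y j))^2)" for j by (simp add: complex_norm_square del: of_real_power)
  have eq2: "mu * of_real N = of_real R" using eq unfolding yy N_def R_def by simp
  have Apos: "\<bar>A j\<bar> < lam" if "j < n" for j
  proof -
    have "0 < real n * alpha d n j" "real n * alpha d n j < 1" using alpha_bounds[OF _ dpos] n3 by auto
    moreover have "A j = lam * (1 - 2 * (real n * alpha d n j))" unfolding A_def by (simp add: algebra_simps)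
    ultimately have "0 < lam * (real n * alpha d n j)" "lam * (real n * alpha d n j) < lam * 1"
      "A j = lam - 2 * (lam * (real n * alpha d n j))"
      using lam by (auto simp: algebra_simps)
    then show ?thesis by (simp add: abs_less_iff)
  qed
  have Npos: "N > 0" unfolding N_def
    using hnz by (intro sum_pos2[of _ i0]) auto
  have "\<bar>R\<bar> \<le> (\<Sum>j<n. \<bar>A j * (cmod (y j))^2\<bar>)" unfolding R_def by (rule sum_abs)
  also have "\<dots> < (\<Sum>j<n. lam * (cmod (y j))^2)"
  proof (rule sum_strict_mono_ex1)
    show "\<forall>x\<in>{..<n}. \<bar>A x * (cmod (y x))\<^sup>2\<bar> \<le> lam * (cmod (y x))\<^sup>2"
    proof
      fix x assume "x \<in> {..<n}"
      then have "\<bar>A x\<bar> \<le> lam" using Apos by (simp add: less_imp_le)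
      then show "\<bar>A x * (cmod (y x))\<^sup>2\<bar> \<le> lam * (cmod (y x))\<^sup>2"
        by (simp add: abs_mult mult_right_mono)
    qed
    show "\<exists>a\<in>{..<n}. \<bar>A a * (cmod (y a))\<^sup>2\<bar> < lam * (cmod (y a))\<^sup>2"
      using Apos[OF hnz(1)] hnz by (intro bexI[of _ i0]) (auto simp: abs_mult)
  qed auto
  also have "\<dots> = lam * N" unfolding N_def by (simp add: sum_distrib_left)
  finally have RN: "\<bar>R\<bar> < lam * N" .
  have "mu = of_real (R / N)" using eq2 Npos by (simp add: field_simps)
  then have "cmod mu = \<bar>R / N\<bar>" by (simp only: norm_of_real)
  also have "\<dots> = \<bar>R\<bar> / N" using Npos by simp
  also have "\<dots> < lam" using RN Npos by (simp add: divide_less_eq)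
  finally show ?thesis .
qed

definition Tm :: "nat \<Rightarrow> complex mat" where
  "Tm n = mat n n (\<lambda>(i,j). if j = 0 then 1 else if j = 1 then of_real (cc n i)
     else if j = 2 then of_real (ss n i) else if i = j then 1 else 0)"

lemma Tm_carrier[simp]: "Tm n \<in> carrier_mat n n" unfolding Tm_def by simp

lemma Tm_dims[simp]: "dim_row (Tm n) = n" "dim_col (Tm n) = n" unfolding Tm_def by simp_all

lemma Tm_entry: assumes "i < n" "j < n"
  shows "Tm n $$ (i,j) = (if j = 0 then 1 else 0) + (if j = 1 then of_real (cc n i) else 0)
    + (if j = 2 then of_real (ss n i) else 0) + (if 3 \<le> j \<and> j = i then 1 else 0)"
  unfolding Tm_def using assms by auto

lemma Tm_mulv: assumes n3: "n \<ge> 3" and i: "i < n" and v: "v \<in> carrier_vec n"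
  shows "(Tm n *\<^sub>v v) $ i = v $ 0 + of_real (cc n i) * v $ 1 + of_real (ss n i) * v $ 2
     + (if 3 \<le> i then v $ i else 0)"
proof -
  have "(Tm n *\<^sub>v v) $ i = (\<Sum>j\<in>{0..<n}. Tm n $$ (i,j) * v $ j)"
    using i v by (auto simp: scalar_prod_def intro!: sum.cong)
  also have "\<dots> = (\<Sum>j\<in>{0..<n}. (if j = 0 then v $ 0 else 0) + (if j = 1 then of_real (cc n i) * v $ 1 else 0)
    + (if j = 2 then of_real (ss n i) * v $ 2 else 0) + (if j = i then (if 3 \<le> i then v $ i else 0) else 0))"
    by (rule sum.cong) (use i in \<open>auto simp: Tm_entry\<close>)
  also have "\<dots> = v $ 0 + of_real (cc n i) * v $ 1 + of_real (ss n i) * v $ 2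
     + (if 3 \<le> i then v $ i else 0)"
    using n3 i by (simp add: sum.distrib)
  finally show ?thesis .
qed

lemma cc_ss_vals: assumes n3: "n \<ge> 3"
  shows "cc n 0 = 1" "ss n 0 = 0" "cc n 2 = 2 * cc n 1 * cc n 1 - 1" "ss n 2 = 2 * ss n 1 * cc n 1"
    "cc n 1 \<noteq> 1" "ss n 1 \<noteq> 0"
proof -
  define a where "a = 2 * pi / real n"
  have a: "0 < a" "a < pi" unfolding a_def using n3 by (auto simp: field_simps)
  have c1: "cc n 1 = cos a" "ss n 1 = sin a" unfolding cc_def ss_def a_def by simp_all
  have c2: "cc n 2 = cos (2 * a)" "ss n 2 = sin (2 * a)" unfolding cc_def ss_def a_def by simp_all
  show "cc n 0 = 1" "ss n 0 = 0" unfolding cc_def ss_def by simp_all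
  show "cc n 2 = 2 * cc n 1 * cc n 1 - 1" unfolding c1 c2 cos_double_cos by (simp add: power2_eq_square)
  show "ss n 2 = 2 * ss n 1 * cc n 1" unfolding c1 c2 sin_double by simp
  show "ss n 1 \<noteq> 0" unfolding c1 using sin_gt_zero[OF a] by simp
  have "cos a < cos 0" using a by (intro cos_monotone_0_pi) auto
  then show "cc n 1 \<noteq> 1" unfolding c1 by simp
qed

lemma Tm_det: assumes n3: "n \<ge> 3" shows "det (Tm n) \<noteq> 0"
proof
  assume "det (Tm n) = 0"
  then obtain v where v: "v \<in> carrier_vec n" "v \<noteq> 0\<^sub>v n" "Tm n *\<^sub>v v = 0\<^sub>v n"
    using det_0_iff_vec_prod_zero[OF Tm_carrier] by auto
  have eq: "v $ 0 + of_real (cc n i) * v $ 1 + of_real (ss n i) * v $ 2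
     + (if 3 \<le> i then v $ i else 0) = 0" if "i < n" for i
    using Tm_mulv[OF n3 that v(1)] v(3) that by simp
  note cs = cc_ss_vals[OF n3]
  have e0: "v $ 0 + v $ 1 = 0" using eq[of 0] n3 cs by simp
  have e1: "v $ 0 + of_real (cc n 1) * v $ 1 + of_real (ss n 1) * v $ 2 = 0" using eq[of 1] n3 by simp
  have e2: "v $ 0 + of_real (cc n 2) * v $ 1 + of_real (ss n 2) * v $ 2 = 0" using eq[of 2] n3 by simp
  define c where "c = complex_of_real (cc n 1)"
  define s where "s = complex_of_real (ss n 1)"
  have c1: "c \<noteq> 1" unfolding c_def using cs(5) by (metis of_real_eq_1_iff)
  have s0: "s \<noteq> 0" unfolding s_def using cs(6) by simp
  have e1': "v $ 0 + c * v $ 1 + s * v $ 2 = 0" using e1 unfolding c_def s_def .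
  have e2': "v $ 0 + (2 * c * c - 1) * v $ 1 + 2 * s * c * v $ 2 = 0" using e2 unfolding c_def s_def cs(3,4) by simp
  have "(c - 1) * v $ 1 = 0"
  proof -
    have "v $ 0 = - v $ 1" using e0 by (simp add: eq_neg_iff_add_eq_0)
    with e1' e2' have "(c - 1) * v $ 1 + s * v $ 2 = 0" "(2 * c * c - 2) * v $ 1 + 2 * s * c * v $ 2 = 0"
      by (simp_all add: algebra_simps)
    then have h: "(c - 1) * v $ 1 + s * v $ 2 = 0" "(2 * c * c - 2) * v $ 1 + 2 * s * c * v $ 2 = 0" by auto
    have "2 * ((c - 1) * v $ 1) = ((2 * c * c - 2) * v $ 1 + 2 * s * c * v $ 2) - 2 * c * ((c - 1) * v $ 1 + s * v $ 2)"
      by (simp add: algebra_simps)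
    also have "\<dots> = 0" using h by simp
    finally have "2 * ((c - 1) * v $ 1) = 0" .
    then show ?thesis by simp
  qed
  then have v1: "v $ 1 = 0" using c1 by simp
  then have v0: "v $ 0 = 0" using e0 by simp
  have v2: "v $ 2 = 0" using e1' v0 v1 s0 by simp
  have "v = 0\<^sub>v n"
  proof (rule eq_vecI)
    fix i assume "i < dim_vec (0\<^sub>v n)"
    then have i: "i < n" by simp
    show "v $ i = 0\<^sub>v n $ i"
    proof (cases "3 \<le> i")
      case True then show ?thesis using eq[OF i] v0 v1 v2 i by simp
    next
      case False then have "i = 0 \<or> i = 1 \<or> i = 2" by auto
      then show ?thesis using v0 v1 v2 i by auto
    qed
  qed (use v in auto)
  with v(2) show False by simp
qed

lemma mat_mult_entry: assumes "A \<in> carrier_mat n n" "C \<in> carrier_mat n n" "k < n" "j < n"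
  shows "(A * C) $$ (k,j) = (\<Sum>i\<in>{0..<n}. A $$ (k,i) * C $$ (i,j))"
  using assms by (auto simp: scalar_prod_def intro!: sum.cong)

lemma QT_cols:
  fixes d n lam
  defines "Qc \<equiv> map_mat complex_of_real (Qmat d n lam)"
  assumes n3: "n \<ge> 3" and dpos: "\<And>i. i < n \<Longrightarrow> d i > 0" and i: "i < n"
  shows "(Qc * Tm n) $$ (i,0) = Tm n $$ (i,0)"
    "(Qc * Tm n) $$ (i,1) = of_real lam * Tm n $$ (i,1) + of_real ((1 - lam) * (\<Sum>k<n. beta d n k * cc n k)) * Tm n $$ (i,0)"
    "(Qc * Tm n) $$ (i,2) = of_real lam * Tm n $$ (i,2) + of_real ((1 - lam) * (\<Sum>k<n. beta d n k * ss n k)) * Tm n $$ (i,0)"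
proof -
  have Qc: "Qc \<in> carrier_mat n n" unfolding Qc_def Qmat_def by simp
  have Qce: "Qc $$ (i,k) = of_real (Qmat d n lam $$ (i,k))" if "k < n" for k
    unfolding Qc_def using i that by (simp add: Qmat_def)
  have T0: "Tm n $$ (k,0) = 1" "Tm n $$ (k,1) = of_real (cc n k)" "Tm n $$ (k,2) = of_real (ss n k)" "Tm n $$ (k,Suc 0) = of_real (cc n k)" if "k < n" for k
    unfolding Tm_def using that n3 by auto
  note R = rows[OF n3 i dpos, where lam=lam]
  have "(Qc * Tm n) $$ (i,0) = (\<Sum>k\<in>{0..<n}. Qc $$ (i,k) * Tm n $$ (k,0))"
    using n3 i by (intro mat_mult_entry[OF Qc Tm_carrier]) auto
  also have "\<dots> = of_real (\<Sum>k<n. Qmat d n lam $$ (i,k))"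
    by (simp add: Qce T0 atLeast0LessThan)
  also have "\<dots> = Tm n $$ (i,0)" using R(1) T0 i by simp
  finally show "(Qc * Tm n) $$ (i,0) = Tm n $$ (i,0)" .
  have "(Qc * Tm n) $$ (i,1) = (\<Sum>k\<in>{0..<n}. Qc $$ (i,k) * Tm n $$ (k,1))"
    using n3 i by (intro mat_mult_entry[OF Qc Tm_carrier]) auto
  also have "\<dots> = of_real (\<Sum>k<n. Qmat d n lam $$ (i,k) * cc n k)"
    by (simp add: Qce T0 atLeast0LessThan)
  also have "\<dots> = of_real lam * Tm n $$ (i,1) + of_real ((1 - lam) * (\<Sum>k<n. beta d n k * cc n k)) * Tm n $$ (i,0)"
    using arg_cong[OF R(2), where f=complex_of_real] T0 i by simp
  finally show "(Qc * Tm n) $$ (i,1) = of_real lam * Tm n $$ (i,1) + of_real ((1 - lam) * (\<Sum>k<n. beta d n k * cc n k)) * Tm n $$ (i,0)" .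
  have "(Qc * Tm n) $$ (i,2) = (\<Sum>k\<in>{0..<n}. Qc $$ (i,k) * Tm n $$ (k,2))"
    using n3 i by (intro mat_mult_entry[OF Qc Tm_carrier]) auto
  also have "\<dots> = of_real (\<Sum>k<n. Qmat d n lam $$ (i,k) * ss n k)"
    by (simp add: Qce T0 atLeast0LessThan)
  also have "\<dots> = of_real lam * Tm n $$ (i,2) + of_real ((1 - lam) * (\<Sum>k<n. beta d n k * ss n k)) * Tm n $$ (i,0)"
    using arg_cong[OF R(3), where f=complex_of_real] T0 i by simp
  finally show "(Qc * Tm n) $$ (i,2) = of_real lam * Tm n $$ (i,2) + of_real ((1 - lam) * (\<Sum>k<n. beta d n k * ss n k)) * Tm n $$ (i,0)" .
qed

lemma B_cols:
  assumes Ti: "Ti \<in> carrier_mat n n" and TiT: "Ti * Tm n = 1\<^sub>m n" and M: "M \<in> carrier_mat n n"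
    and col: "\<And>i. i < n \<Longrightarrow> M $$ (i,j) = a * Tm n $$ (i,j) + b * Tm n $$ (i,0)"
    and k: "k < n" and j: "j < n"
  shows "(Ti * M) $$ (k,j) = a * (if k = j then 1 else 0) + b * (if k = 0 then 1 else 0)"
proof -
  have "(Ti * M) $$ (k,j) = (\<Sum>i\<in>{0..<n}. Ti $$ (k,i) * M $$ (i,j))"
    by (rule mat_mult_entry[OF Ti M k j])
  also have "\<dots> = (\<Sum>i\<in>{0..<n}. a * (Ti $$ (k,i) * Tm n $$ (i,j)) + b * (Ti $$ (k,i) * Tm n $$ (i,0)))"
    by (rule sum.cong) (auto simp: col algebra_simps)
  also have "\<dots> = a * (Ti * Tm n) $$ (k,j) + b * (Ti * Tm n) $$ (k,0)"
    using k j by (simp add: mat_mult_entry[OF Ti Tm_carrier] sum.distrib sum_distrib_left)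
  also have "\<dots> = a * (if k = j then 1 else 0) + b * (if k = 0 then 1 else 0)"
    unfolding TiT using k j by simp
  finally show ?thesis .
qed

lemma transp_mulv: assumes "A \<in> carrier_mat n n" "y \<in> carrier_vec n" "j < n"
  shows "(transpose_mat A *\<^sub>v y) $ j = (\<Sum>i\<in>{0..<n}. A $$ (i,j) * y $ i)"
  using assms by (auto simp: scalar_prod_def intro!: sum.cong)

lemma poly_prod_root: assumes "mu \<in> set mus"
  shows "poly (\<Prod>a\<leftarrow>mus. [:- a, 1:]) mu = (0::complex)"
proof -
  have "poly (\<Prod>a\<leftarrow>mus. [:- a, 1:]) mu = (\<Prod>a\<leftarrow>mus. poly [:- a, 1:] mu)"
    by (induction mus) (auto simp: algebra_simps)
  also have "\<dots> = 0" unfolding prod_list_zero_iff using assms by force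
  finally show ?thesis .
qed

theorem lemma1:
  fixes n :: nat and d :: "nat \<Rightarrow> real" and lam :: real
  assumes "n \<ge> 3"
    and "\<And>i. i < n \<Longrightarrow> d i > 0"
    and "1/4 < lam" and "lam < 1"
  shows "\<exists>mus :: complex list. length mus = n - 3
           \<and> (\<forall>\<mu>\<in>set mus. cmod \<mu> < lam)
           \<and> char_poly (map_mat complex_of_real (Qmat d n lam))
               = [:-1, 1:] * [:- complex_of_real lam, 1:] ^ 2 * (\<Prod>\<mu>\<leftarrow>mus. [:-\<mu>, 1:])"
proof -
  note n3 = assms(1) and dpos = assms(2)
  have lam0: "lam > 0" using assms(3) by simp
  define Qc where "Qc = map_mat complex_of_real (Qmat d n lam)"
  define T where "T = Tm n"
  have Qc: "Qc \<in> carrier_mat n n" unfolding Qc_def Qmat_def by simp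
  have T: "T \<in> carrier_mat n n" unfolding T_def by simp
  have "T \<in> Units (ring_mat TYPE(complex) n undefined)"
    unfolding T_def by (rule det_non_zero_imp_unit[OF Tm_carrier Tm_det[OF n3]])
  then obtain Ti where Ti: "Ti \<in> carrier_mat n n" and TiT: "Ti * T = 1\<^sub>m n" and TTi: "T * Ti = 1\<^sub>m n"
    unfolding Units_def ring_mat_simps by auto
  define B where "B = Ti * (Qc * T)"
  have B: "B \<in> carrier_mat n n" unfolding B_def using Ti Qc T by simp
  define g1 where "g1 = complex_of_real ((1 - lam) * (\<Sum>k<n. beta d n k * cc n k))"
  define g2 where "g2 = complex_of_real ((1 - lam) * (\<Sum>k<n. beta d n k * ss n k))"
  have QT: "Qc * T \<in> carrier_mat n n" using Qc T by simp
  have B0: "B $$ (k,0) = (if k = 0 then 1 else 0)" if "k < n" for k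
    using B_cols[OF Ti TiT[unfolded T_def] QT[unfolded T_def], of 0 1 0 k] QT_cols(1)[OF n3 dpos] that n3
    unfolding B_def T_def Qc_def by simp
  have B1: "B $$ (k,1) = of_real lam * (if k = 1 then 1 else 0) + g1 * (if k = 0 then 1 else 0)" if "k < n" for k
    using B_cols[OF Ti TiT[unfolded T_def] QT[unfolded T_def], of 1 "of_real lam" g1 k] QT_cols(2)[OF n3 dpos] that n3
    unfolding B_def T_def Qc_def g1_def by simp
  have B2: "B $$ (k,2) = of_real lam * (if k = 2 then 1 else 0) + g2 * (if k = 0 then 1 else 0)" if "k < n" for k
    using B_cols[OF Ti TiT[unfolded T_def] QT[unfolded T_def], of 2 "of_real lam" g2 k] QT_cols(3)[OF n3 dpos] that n3
    unfolding B_def T_def Qc_def g2_def by simp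
  have sim: "similar_mat Qc B"
    unfolding similar_mat_def
  proof (intro exI)
    show "similar_mat_wit Qc B T Ti"
    proof (rule similar_mat_witI[OF TTi TiT _ Qc B T Ti])
      have "T * B * Ti = (T * Ti) * Qc * (T * Ti)" unfolding B_def using T Ti Qc
        by (simp add: assoc_mult_mat[of _ n n _ n _ n])
      then show "Qc = T * B * Ti" unfolding TTi using Qc by simp
    qed
  qed
  obtain B1 B2 B3 B4 where sb: "split_block B 3 3 = (B1, B2, B3, B4)"
    by (cases "split_block B 3 3") auto
  have dimsB: "dim_row B = 3 + (n - 3)" "dim_col B = 3 + (n - 3)" using B n3 by auto
  note spl = split_block[OF sb dimsB]
  have B1def: "B1 = mat 3 3 (\<lambda>ij. B $$ ij)" and B3def: "B3 = mat (n - 3) 3 (\<lambda>(i,j). B $$ (i + 3, j))"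
    using sb B unfolding split_block_def Let_def by auto
  have B3z: "B3 = 0\<^sub>m (n - 3) 3"
  proof (rule eq_matI)
    fix i j assume ij: "i < dim_row (0\<^sub>m (n - 3) 3)" "j < dim_col (0\<^sub>m (n - 3) (3::nat))"
    then have "i + 3 < n" "j < 3" by auto
    then have "j = 0 \<or> j = 1 \<or> j = 2" by auto
    then show "B3 $$ (i, j) = (0\<^sub>m (n - 3) 3 :: complex mat) $$ (i, j)"
      using ij \<open>i + 3 < n\<close> B0 B1 B2 unfolding B3def by auto
  qed (auto simp: B3def)
  have Bblock: "B = four_block_mat B1 B2 (0\<^sub>m (n - 3) 3) B4" using spl(5) B3z by simp
  have cpB: "char_poly B = char_poly B1 * char_poly B4"
    by (rule char_poly_0_block[OF Bblock _ _ spl(1,2,4)])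
      (use char_poly_factorized[OF spl(1)] char_poly_factorized[OF spl(4)] in blast)+
  have ut: "upper_triangular B1" unfolding upper_triangular_def B1def
  proof (intro allI impI)
    fix i j assume "i < dim_row (mat 3 3 (($$) B))" "j < i"
    then have "i < 3" "j < i" by auto
    then have "(i = 1 \<and> j = 0) \<or> (i = 2 \<and> j = 0) \<or> (i = 2 \<and> j = 1)" by auto
    then show "mat 3 3 (($$) B) $$ (i, j) = 0" using B0 B1 n3 by auto
  qed
  have diagB1: "diag_mat B1 = [1, of_real lam, of_real lam]"
  proof -
    have u: "[0..<3] = [0::nat,1,2]" by (simp add: upt_rec)
    have "B $$ (0,0) = 1" "B $$ (1,1) = of_real lam" "B $$ (2,2) = of_real lam"
      using B0[of 0] B1[of 1] B2[of 2] n3 by auto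
    then show ?thesis unfolding diag_mat_def B1def by (simp add: u)
  qed
  have cpB1: "char_poly B1 = [:-1, 1:] * [:- complex_of_real lam, 1:] ^ 2"
    unfolding char_poly_upper_triangular[OF spl(1) ut] diagB1 by (simp add: power2_eq_square)
  obtain mus where cp4: "char_poly B4 = (\<Prod>a\<leftarrow>mus. [:- a, 1:])" and len: "length mus = n - 3"
    using char_poly_factorized[OF spl(4)] by blast
  have BTi: "B * Ti = Ti * Qc" unfolding B_def using Ti Qc T
    by (simp add: assoc_mult_mat[of _ n n _ n _ n] TTi)
  have tr1: "transpose_mat Qc * transpose_mat Ti = transpose_mat Ti * transpose_mat B"
    using transpose_mult[OF B Ti] transpose_mult[OF Ti Qc] BTi by simp
  have tr2: "transpose_mat T * transpose_mat Ti = 1\<^sub>m n"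
    using transpose_mult[OF Ti T] TiT by simp
  have BT: "transpose_mat B = four_block_mat (transpose_mat B1) (0\<^sub>m 3 (n - 3)) (transpose_mat B2) (transpose_mat B4)"
    unfolding Bblock by (subst transpose_four_block_mat[OF spl(1,2) _ spl(4)]) auto
  have mus_ok: "cmod mu < lam" if mu: "mu \<in> set mus" for mu
  proof -
    have "poly (char_poly (transpose_mat B4)) mu = 0"
      using poly_prod_root[OF mu] cp4 spl(4) by simp
    then have "eigenvalue (transpose_mat B4) mu"
      using eigenvalue_root_char_poly[of "transpose_mat B4" "n - 3"] spl(4) by auto
    then obtain w where w: "w \<in> carrier_vec (n - 3)" "w \<noteq> 0\<^sub>v (n - 3)"
      "transpose_mat B4 *\<^sub>v w = mu \<cdot>\<^sub>v w"
      unfolding eigenvalue_def eigenvector_def using spl(4) by auto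
    define v where "v = 0\<^sub>v 3 @\<^sub>v w"
    have v3: "v \<in> carrier_vec (3 + (n - 3))" unfolding v_def using w by auto
    have v: "v \<in> carrier_vec n" using v3 n3 by simp
    have Bv: "transpose_mat B *\<^sub>v v = mu \<cdot>\<^sub>v v"
    proof -
      have "transpose_mat B *\<^sub>v v = (transpose_mat B1 *\<^sub>v 0\<^sub>v 3 + 0\<^sub>m 3 (n - 3) *\<^sub>v w) @\<^sub>v
          (transpose_mat B2 *\<^sub>v 0\<^sub>v 3 + transpose_mat B4 *\<^sub>v w)"
        unfolding BT v_def
        by (rule four_block_mat_mult_vec) (use spl w in auto)
      also have "\<dots> = 0\<^sub>v 3 @\<^sub>v (mu \<cdot>\<^sub>v w)"
      proof -
        have a: "transpose_mat B1 *\<^sub>v 0\<^sub>v 3 = 0\<^sub>v 3" using spl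
          by (intro eq_vecI) (auto simp: scalar_prod_def)
        have b: "0\<^sub>m 3 (n - 3) *\<^sub>v w = 0\<^sub>v 3" using w
          by (intro eq_vecI) (auto simp: scalar_prod_def)
        have c: "transpose_mat B2 *\<^sub>v 0\<^sub>v 3 = 0\<^sub>v (n - 3)" using spl
          by (intro eq_vecI) (auto simp: scalar_prod_def)
        have e: "0\<^sub>v (n - 3) + mu \<cdot>\<^sub>v w = mu \<cdot>\<^sub>v w" using w by simp
        show ?thesis unfolding a b c w(3) e by simp
      qed
      also have "\<dots> = mu \<cdot>\<^sub>v v" unfolding v_def using w by (auto intro!: eq_vecI)
      finally show ?thesis .
    qed
    define y where "y = transpose_mat Ti *\<^sub>v v"
    have y: "y \<in> carrier_vec n" unfolding y_def carrier_vec_def using Ti by simp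
    have Qy: "transpose_mat Qc *\<^sub>v y = mu \<cdot>\<^sub>v y"
    proof -
      have "transpose_mat Qc *\<^sub>v y = (transpose_mat Qc * transpose_mat Ti) *\<^sub>v v"
        unfolding y_def using Qc Ti v by (simp add: assoc_mult_mat_vec[of _ n n _ n v])
      also have "\<dots> = transpose_mat Ti *\<^sub>v (transpose_mat B *\<^sub>v v)"
        unfolding tr1 using Ti B v by (simp add: assoc_mult_mat_vec[of _ n n _ n v])
      also have "\<dots> = mu \<cdot>\<^sub>v y" unfolding Bv y_def using Ti v by (simp add: mult_mat_vec[of _ n n])
      finally show ?thesis .
    qed
    have Ty: "transpose_mat T *\<^sub>v y = v"
    proof -
      have "transpose_mat T *\<^sub>v y = (transpose_mat T * transpose_mat Ti) *\<^sub>v v"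
        unfolding y_def using T Ti v by (simp add: assoc_mult_mat_vec[of _ n n _ n v])
      then show ?thesis unfolding tr2 using v by simp
    qed
    have vz: "v $ j = 0" if "j < 3" for j unfolding v_def using that w by simp
    have Tyj: "(\<Sum>i\<in>{0..<n}. T $$ (i,j) * y $ i) = 0" if "j < 3" for j
      using transp_mulv[OF T y, of j] Ty vz[OF that] that n3 by simp
    have Te: "T $$ (i,0) = 1" "T $$ (i,1) = of_real (cc n i)" "T $$ (i,2) = of_real (ss n i)" if "i < n" for i
      unfolding T_def Tm_def using that n3 by auto
    have h0: "(\<Sum>i<n. y $ i) = 0" using Tyj[of 0] Te by (simp add: atLeast0LessThan)
    have h1: "(\<Sum>i<n. of_real (cc n i) * y $ i) = 0" using Tyj[of 1] Te by (simp add: atLeast0LessThan)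
    have h2: "(\<Sum>i<n. of_real (ss n i) * y $ i) = 0" using Tyj[of 2] Te by (simp add: atLeast0LessThan)
    have hev: "(\<Sum>i<n. y $ i * of_real (Qmat d n lam $$ (i,j))) = mu * y $ j" if j: "j < n" for j
    proof -
      have "(transpose_mat Qc *\<^sub>v y) $ j = mu * y $ j" using Qy j y by simp
      moreover have "(transpose_mat Qc *\<^sub>v y) $ j = (\<Sum>i<n. y $ i * of_real (Qmat d n lam $$ (i,j)))"
        unfolding transp_mulv[OF Qc y j] atLeast0LessThan
        by (rule sum.cong) (use j in \<open>auto simp: Qc_def Qmat_def\<close>)
      ultimately show ?thesis by simp
    qed
    have "y \<noteq> 0\<^sub>v n"
    proof
      assume "y = 0\<^sub>v n"
      moreover have "transpose_mat T *\<^sub>v 0\<^sub>v n = 0\<^sub>v n" using T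
        by (intro eq_vecI) (auto simp: scalar_prod_def)
      ultimately have "v = 0\<^sub>v n" using Ty by simp
      then have "w = 0\<^sub>v (n - 3)"
      proof -
        assume v0: "v = 0\<^sub>v n"
        show "w = 0\<^sub>v (n - 3)"
        proof (rule eq_vecI)
          fix i assume "i < dim_vec (0\<^sub>v (n - 3))"
          then have i: "i < n - 3" by simp
          have "v $ (i + 3) = w $ i" unfolding v_def using w i by simp
          then show "w $ i = 0\<^sub>v (n - 3) $ i" using v0 i by simp
        qed (use w in auto)
      qed
      with w(2) show False by simp
    qed
    then obtain i0 where i0: "i0 < n" "y $ i0 \<noteq> 0" using y by (metis carrier_vecD eq_vecI index_zero_vec)
    show ?thesis
      by (rule key[where y="\<lambda>i. y $ i", OF n3 dpos lam0 h0 h1 h2 hev i0])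
  qed
  have "char_poly (map_mat complex_of_real (Qmat d n lam)) = char_poly B"
    unfolding Qc_def[symmetric] by (rule char_poly_similar[OF sim])
  also have "\<dots> = [:-1, 1:] * [:- complex_of_real lam, 1:] ^ 2 * (\<Prod>\<mu>\<leftarrow>mus. [:-\<mu>, 1:])"
    unfolding cpB cpB1 cp4 ..
  finally show ?thesis using len mus_ok by blast
qed
end
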